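(* Let $Z\colon\mathbb{R}^n\to\mathbb{R}^m$ be a jointly measurable random map. Assume that $\mu\in\mathcal{P}_c(\mathbb{R}^n)$ and $A\subset\mathbb{R}^n$ is an analytic set. Then, almost surely, $$\dim_P \mu_Z\ge \dim_{P,Z}\mu \quad\text{and}\quad \dim_P Z(A)\ge \dim_{P,Z} A.$$
   Context: A random map $Z\colon\mathbb{R}^n\to\mathbb{R}^m$ on a probability space $(\Omega,\mathcal{F},\mathbb{P})$ is jointly measurable if $Z\colon\mathbb{R}^n\times\Omega\to\mathbb{R}^m$ is measurable from $\mathcal{B}(\mathbb{R}^n)\otimes\mathcal{F}$ to $\mathcal{B}(\mathbb{R}^m)$. $\mathcal{P}_c(A)$ is the set of Borel probability measures with compact support contained in $A$; $\mu_Z=\mu\circ Z^{-1}$. $\dim_P$ of a set is packing dimension; for a Borel probability measure $\nu$ on $\mathbb{R}^m$, $\dim_P\nu=\inf\{\dim_P E: E \text{ Borel}, \nu(E)>0\}$. $B(x,r)$ is the closed Euclidean ball. For $\mu\in\mathcal{P}_c(\mathbb{R}^n)$, $$\dim_{P,Z}\mu=\sup\Big\{\gamma:\ \liminf_{r\to0+} r^{-\gamma}\,\mathbb{E}\big(\mu_Z(B(Z(t),r))\big)=0 \text{ for } \mu\text{-a.e. } t\Big\},$$ and $\dim_{P,Z}A=\sup\{\dim_{P,Z}\mu:\mu\in\mathcal{P}_c(A)\}$. *)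

theory Defs
  imports "HOL-Probability.Probability"
begin

text \<open>Packing premeasure: for delta > 0, supremum over (finite, hence also countable)
  disjoint families of closed balls centred in E with radii at most delta of
  the sum of diam^s; then the limit as delta tends to 0 (an infimum, by monotonicity).\<close>
definition packing_premeasure :: "real \<Rightarrow> 'a::euclidean_space set \<Rightarrow> ennreal" where
  "packing_premeasure s E =
     (INF \<delta>\<in>{0<..}. SUP F\<in>{F. finite F \<and> (\<forall>(x,r)\<in>F. x \<in> E \<and> 0 < r \<and> r \<le> \<delta>)
                         \<and> disjoint_family_on (\<lambda>(x,r). cball x r) F}.
        (\<Sum>(x,r)\<in>F. ennreal ((2 * r) powr s)))"

definition packing_measure :: "real \<Rightarrow> 'a::euclidean_space set \<Rightarrow> ennreal" where
  "packing_measure s E =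
     (INF Es\<in>{Es :: nat \<Rightarrow> 'a set. E \<subseteq> (\<Union>i. Es i)}. (\<Sum>i. packing_premeasure s (Es i)))"

definition packing_dim :: "'a::euclidean_space set \<Rightarrow> ereal" where
  "packing_dim E = Inf {ereal s | s. 0 \<le> s \<and> packing_measure s E = 0}"

text \<open>Packing dimension of a Borel measure (inf over empty set is +infinity).\<close>
definition packing_dim_measure :: "'a::euclidean_space measure \<Rightarrow> ereal" where
  "packing_dim_measure \<nu> = Inf {packing_dim E | E. E \<in> sets borel \<and> emeasure \<nu> E > 0}"

definition measure_support :: "'a::topological_space measure \<Rightarrow> 'a set" where
  "measure_support \<mu> = {x. \<forall>U. open U \<and> x \<in> U \<longrightarrow> emeasure \<mu> U > 0}"

definition Pc :: "'a::euclidean_space set \<Rightarrow> 'a measure set" where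
  "Pc A = {\<mu>. sets \<mu> = sets borel \<and> prob_space \<mu> \<and>
              compact (measure_support \<mu>) \<and> measure_support \<mu> \<subseteq> A}"

definition jointly_measurable :: "'w measure \<Rightarrow> ('a::euclidean_space \<Rightarrow> 'w \<Rightarrow> 'b::euclidean_space) \<Rightarrow> bool" where
  "jointly_measurable M Z \<longleftrightarrow> (\<lambda>(t, \<omega>). Z t \<omega>) \<in> borel_measurable (borel \<Otimes>\<^sub>M M)"

definition image_measure :: "'a::euclidean_space measure \<Rightarrow> ('a \<Rightarrow> 'w \<Rightarrow> 'b::euclidean_space) \<Rightarrow> 'w \<Rightarrow> 'b measure" where
  "image_measure \<mu> Z \<omega> = distr \<mu> borel (\<lambda>t. Z t \<omega>)"

definition packing_dim_Z :: "'w measure \<Rightarrow> ('a::euclidean_space \<Rightarrow> 'w \<Rightarrow> 'b::euclidean_space) \<Rightarrow> 'a measure \<Rightarrow> ereal" where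
  "packing_dim_Z M Z \<mu> = Sup {ereal \<gamma> | \<gamma>.
      AE t in \<mu>. Liminf (at_right (0::real))
        (\<lambda>r. ennreal (r powr (-\<gamma>)) *
             (\<integral>\<^sup>+ \<omega>. emeasure (image_measure \<mu> Z \<omega>) (cball (Z t \<omega>) r) \<partial>M)) = 0}"

definition packing_dim_Z_set :: "'w measure \<Rightarrow> ('a::euclidean_space \<Rightarrow> 'w \<Rightarrow> 'b::euclidean_space) \<Rightarrow> 'a set \<Rightarrow> ereal" where
  "packing_dim_Z_set M Z A = Sup (packing_dim_Z M Z ` Pc A)"

definition analytic_set :: "'a::euclidean_space set \<Rightarrow> bool" where
  "analytic_set A \<longleftrightarrow> A = {} \<or> (\<exists>f :: (nat \<Rightarrow> nat) \<Rightarrow> 'a. continuous_on UNIV f \<and> range f = A)"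

end

theory Submission
  imports Defs
begin

locale setup_Z =
  fixes M :: "'w measure" and Z :: "'a::euclidean_space \<Rightarrow> 'w \<Rightarrow> 'b::euclidean_space" and \<mu> :: "'a measure"
  assumes M: "prob_space M" and JM: "jointly_measurable M Z"
    and S\<mu>: "sets \<mu> = sets borel" and P\<mu>: "prob_space \<mu>"
begin

lemma sp\<mu>[simp]: "space \<mu> = UNIV"
  using sets_eq_imp_space_eq[OF S\<mu>] by simp

lemma Zm: "(\<lambda>x. Z (fst x) (snd x)) \<in> borel_measurable (\<mu> \<Otimes>\<^sub>M M)"
proof -
  have "(\<lambda>(t, \<omega>). Z t \<omega>) \<in> borel_measurable (borel \<Otimes>\<^sub>M M)" using JM by (simp add: jointly_measurable_def)
  then show ?thesis
    by (subst measurable_cong_sets[OF sets_pair_measure_cong[OF S\<mu> refl] refl]) (simp add: case_prod_beta')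
qed

lemma Zm2: "(\<lambda>x. Z (f x) (g x)) \<in> borel_measurable N" if "f \<in> measurable N \<mu>" "g \<in> measurable N M"
  using measurable_compose[OF measurable_Pair[OF that] Zm] by simp

lemma Zsec: "(\<lambda>t. Z t \<omega>) \<in> borel_measurable \<mu>" if "\<omega> \<in> space M"
  using Zm2[of "\<lambda>t. t" \<mu> "\<lambda>_. \<omega>"] that by simp

definition f where "f t \<omega> r = emeasure (image_measure \<mu> Z \<omega>) (cball (Z t \<omega>) r)"

lemma f_eq: "\<omega> \<in> space M \<Longrightarrow> f t \<omega> r = emeasure \<mu> {t'. dist (Z t \<omega>) (Z t' \<omega>) \<le> r}"
  unfolding f_def image_measure_def
  by (subst emeasure_distr[OF Zsec]) (auto simp: mem_cball intro!: arg_cong2[where f=emeasure])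

lemma f_meas: "(\<lambda>x. f (fst x) (snd x) r) \<in> borel_measurable (\<mu> \<Otimes>\<^sub>M M)"
proof -
  interpret \<mu>: prob_space \<mu> by (rule P\<mu>)
  interpret M: prob_space M by (rule M)
  have m: "(\<lambda>y. indicator {t'. dist (Z (fst (fst y)) (snd (fst y))) (Z t' (snd (fst y))) \<le> r} (snd y) :: ennreal)
     \<in> borel_measurable ((\<mu> \<Otimes>\<^sub>M M) \<Otimes>\<^sub>M \<mu>)"
  proof -
    have a: "(\<lambda>y. Z (fst (fst y)) (snd (fst y))) \<in> borel_measurable ((\<mu> \<Otimes>\<^sub>M M) \<Otimes>\<^sub>M \<mu>)"
      by (rule Zm2) measurable
    have b: "(\<lambda>y. Z (snd y) (snd (fst y))) \<in> borel_measurable ((\<mu> \<Otimes>\<^sub>M M) \<Otimes>\<^sub>M \<mu>)"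
      by (rule Zm2) measurable
    have "{y \<in> space ((\<mu> \<Otimes>\<^sub>M M) \<Otimes>\<^sub>M \<mu>). dist (Z (fst (fst y)) (snd (fst y))) (Z (snd y) (snd (fst y))) \<le> r} \<in> sets ((\<mu> \<Otimes>\<^sub>M M) \<Otimes>\<^sub>M \<mu>)"
      using a b by measurable
    then show ?thesis
      by (rule measurable_cong[THEN iffD1, OF _ borel_measurable_indicator, rotated]) (auto simp: indicator_def space_pair_measure)
  qed
  have "(\<lambda>x. \<integral>\<^sup>+ t'. indicator {t'. dist (Z (fst x) (snd x)) (Z t' (snd x)) \<le> r} t' \<partial>\<mu>) \<in> borel_measurable (\<mu> \<Otimes>\<^sub>M M)"
    using \<mu>.borel_measurable_nn_integral[of "\<lambda>x t'. indicator {t'. dist (Z (fst x) (snd x)) (Z t' (snd x)) \<le> r} t'"] m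
    by (simp add: case_prod_beta')
  then show ?thesis
  proof (rule measurable_cong[THEN iffD1, rotated])
    fix x assume "x \<in> space (\<mu> \<Otimes>\<^sub>M M)"
    then have "snd x \<in> space M" by (auto simp: space_pair_measure)
    then show "(\<integral>\<^sup>+ t'. indicator {t'. dist (Z (fst x) (snd x)) (Z t' (snd x)) \<le> r} t' \<partial>\<mu>) = f (fst x) (snd x) r"
    proof -
      have g[measurable]: "(\<lambda>t. Z t (snd x)) \<in> borel_measurable \<mu>" using Zsec[OF \<open>snd x \<in> space M\<close>] .
      have "{t' \<in> space \<mu>. dist (Z (fst x) (snd x)) (Z t' (snd x)) \<le> r} \<in> sets \<mu>"
        by measurable
      then have "{t'. dist (Z (fst x) (snd x)) (Z t' (snd x)) \<le> r} \<in> sets \<mu>" by simp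
      then show ?thesis using \<open>snd x \<in> space M\<close> by (subst f_eq) (auto intro!: nn_integral_indicator)
    qed
  qed
qed

end

definition goodQ :: "real \<Rightarrow> (real \<Rightarrow> ennreal) \<Rightarrow> bool" where
  "goodQ \<gamma> g \<longleftrightarrow> (\<forall>k::nat. \<forall>j::nat. \<exists>q::rat. 0 < real_of_rat q \<and> real_of_rat q < 1 / Suc j \<and>
      ennreal (real_of_rat q powr -\<gamma>) * g (real_of_rat q) < ennreal (1 / Suc k))"

lemma rat_near:
  fixes \<gamma> r :: real
  assumes r: "0 < r"
  obtains q :: rat where "0 < real_of_rat q" "real_of_rat q < r" "real_of_rat q powr -\<gamma> < 2 * r powr -\<gamma>"
proof -
  have "isCont (\<lambda>q. q powr -\<gamma>) r" using r by (intro continuous_intros) auto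
  then have "((\<lambda>q. q powr -\<gamma>) \<longlongrightarrow> r powr -\<gamma>) (at r)" by (simp add: isCont_def)
  moreover have "r powr -\<gamma> < 2 * r powr -\<gamma>" using r by simp
  ultimately have "eventually (\<lambda>q. q powr -\<gamma> < 2 * r powr -\<gamma>) (at r)" by (rule order_tendstoD)
  then obtain \<eta> where \<eta>: "\<eta> > 0" "\<And>q. q \<noteq> r \<Longrightarrow> dist q r < \<eta> \<Longrightarrow> q powr -\<gamma> < 2 * r powr -\<gamma>"
    unfolding eventually_at by blast
  obtain q where q: "q \<in> \<rat>" "max 0 (r - \<eta>) < q" "q < r"
    using Rats_dense_in_real[of "max 0 (r - \<eta>)" r] r \<eta> by auto
  then obtain q' where "q = real_of_rat q'" by (auto simp: Rats_def)
  with q \<eta> show ?thesis by (intro that[of q']) (auto simp: dist_real_def)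
qed

lemma liminf_to_rat:
  fixes g :: "real \<Rightarrow> ennreal"
  assumes mono: "\<And>r r'. 0 < r \<Longrightarrow> r \<le> r' \<Longrightarrow> g r \<le> g r'"
    and L: "Liminf (at_right 0) (\<lambda>r. ennreal (r powr -\<gamma>) * g r) = 0"
    and e: "0 < e" and d: "0 < d"
  shows "\<exists>q::rat. 0 < real_of_rat q \<and> real_of_rat q < d \<and>
      ennreal (real_of_rat q powr -\<gamma>) * g (real_of_rat q) < ennreal e"
proof -
  have "\<not> (ennreal (e/2) \<le> Liminf (at_right 0) (\<lambda>r. ennreal (r powr -\<gamma>) * g r))"
    using L e by simp
  then obtain y where y: "y < ennreal (e/2)" "\<not> eventually (\<lambda>r. y < ennreal (r powr -\<gamma>) * g r) (at_right 0)"
    unfolding le_Liminf_iff by blast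
  have ev: "eventually (\<lambda>r. 0 < r \<and> r < d) (at_right (0::real))"
    using d eventually_at_right_less[of 0] by (auto simp: eventually_at_right)
  have "frequently (\<lambda>r. \<not> y < ennreal (r powr -\<gamma>) * g r) (at_right 0)"
    using y(2) by (simp add: frequently_def)
  from frequently_eventually_frequently[OF this ev] obtain r where
    r: "0 < r" "r < d" "ennreal (r powr -\<gamma>) * g r \<le> y"
    by (auto dest: frequently_ex simp: not_less)
  obtain q where q: "0 < real_of_rat q" "real_of_rat q < r" "real_of_rat q powr -\<gamma> < 2 * r powr -\<gamma>"
    using rat_near[OF r(1)] by blast
  have "ennreal (real_of_rat q powr -\<gamma>) * g (real_of_rat q) \<le> ennreal (2 * r powr -\<gamma>) * g r"
    using q by (intro mult_mono mono) (auto intro!: ennreal_leI)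
  also have "\<dots> = 2 * (ennreal (r powr -\<gamma>) * g r)"
    by (simp add: ennreal_mult mult.assoc)
  also have "\<dots> \<le> 2 * y" using r by (intro mult_left_mono) auto
  also have "\<dots> < ennreal e"
  proof -
    have "y < ennreal (e/2)" by (rule y(1))
    then obtain a where a: "y = ennreal a" "0 \<le> a" "a < e/2"
      by (metis ennreal_cases ennreal_less_iff less_top order.strict_trans top_greatest ennreal_less_top not_less)
    have "2 * ennreal a = ennreal (2 * a)" using a(2) by (simp add: ennreal_mult ennreal_numeral[symmetric] del: ennreal_numeral)
    then show ?thesis using e a by (simp add: ennreal_lessI)
  qed
  finally show ?thesis using q r by (intro exI[of _ q]) auto
qed

context setup_Z begin

lemma f_mono: "\<omega> \<in> space M \<Longrightarrow> r \<le> r' \<Longrightarrow> f t \<omega> r \<le> f t \<omega> r'"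
  unfolding f_def image_measure_def
  by (intro emeasure_mono) (auto simp: subset_cball)

lemma f_sec: "t \<in> space \<mu> \<Longrightarrow> (\<lambda>\<omega>. f t \<omega> r) \<in> borel_measurable M"
  using measurable_Pair2[OF f_meas[of r], of t] by simp

lemma pointwise:
  assumes L: "Liminf (at_right 0) (\<lambda>r. ennreal (r powr -\<gamma>) * (\<integral>\<^sup>+\<omega>. f t \<omega> r \<partial>M)) = 0"
  shows "AE \<omega> in M. goodQ \<gamma> (f t \<omega>)"
proof -
  define I where "I r = (\<integral>\<^sup>+\<omega>. f t \<omega> r \<partial>M)" for r
  have Imono: "I r \<le> I r'" if "0 < r" "r \<le> r'" for r r'
    unfolding I_def using that by (intro nn_integral_mono f_mono) auto
  have "\<forall>k::nat. \<exists>q::rat. 0 < real_of_rat q \<and> real_of_rat q < 1 / Suc k \<and>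
      ennreal (real_of_rat q powr -\<gamma>) * I (real_of_rat q) < ennreal (1 / Suc k)"
    using liminf_to_rat[of I \<gamma>] Imono L unfolding I_def by auto
  then obtain q where q: "\<And>k. 0 < real_of_rat (q k)" "\<And>k. real_of_rat (q k) < 1 / Suc k"
    "\<And>k. ennreal (real_of_rat (q k) powr -\<gamma>) * I (real_of_rat (q k)) < ennreal (1 / Suc k)"
    by (subst (asm) choice_iff) (elim exE, blast)
  define u where "u k \<omega> = ennreal (real_of_rat (q k) powr -\<gamma>) * f t \<omega> (real_of_rat (q k))" for k \<omega>
  have um[measurable]: "u k \<in> borel_measurable M" for k
    unfolding u_def using f_sec[of t] by simp
  have iu: "integral\<^sup>N M (u k) \<le> ennreal (inverse (real (Suc k)))" for k
    unfolding u_def using q(3)[of k] f_sec[of t] by (subst nn_integral_cmult) (auto simp: I_def divide_inverse)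
  have "liminf (\<lambda>k. integral\<^sup>N M (u k)) \<le> liminf (\<lambda>k. ennreal (inverse (real (Suc k))))"
    using iu by (intro Liminf_mono) auto
  also have "\<dots> = 0"
    by (intro lim_imp_Liminf tendsto_ennrealI[of _ 0, simplified] LIMSEQ_inverse_real_of_nat) auto
  finally have "liminf (\<lambda>k. integral\<^sup>N M (u k)) \<le> 0" .
  then have "(\<integral>\<^sup>+ x. liminf (\<lambda>n. u n x) \<partial>M) = 0"
    using order.trans[OF nn_integral_liminf[OF um]] by fastforce
  then have "AE \<omega> in M. liminf (\<lambda>n. u n \<omega>) = 0"
    by (subst (asm) nn_integral_0_iff_AE) auto
  then show ?thesis
  proof (rule eventually_mono)
    fix \<omega> assume lim: "liminf (\<lambda>n. u n \<omega>) = 0"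
    show "goodQ \<gamma> (f t \<omega>)" unfolding goodQ_def
    proof (intro allI)
      fix k0 j0 :: nat
      have "\<not> (ennreal (1 / Suc k0) \<le> liminf (\<lambda>n. u n \<omega>))" using lim by simp
      then obtain y where y: "y < ennreal (1 / Suc k0)" "\<not> eventually (\<lambda>n. y < u n \<omega>) sequentially"
        unfolding le_Liminf_iff by blast
      have "frequently (\<lambda>n. \<not> y < u n \<omega>) sequentially"
        using y(2) by (simp add: frequently_def)
      from frequently_eventually_frequently[OF this eventually_ge_at_top[of j0]] obtain n where
        n: "u n \<omega> \<le> y" "j0 \<le> n"
        by (auto dest: frequently_ex simp: not_less)
      have "real_of_rat (q n) < 1 / Suc j0"
        using q(2)[of n] n(2) proof -
          have "1 / real (Suc n) \<le> 1 / Suc j0" using n(2) by (intro divide_left_mono) auto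
          then show ?thesis using q(2)[of n] by linarith
        qed
      then show "\<exists>q. 0 < real_of_rat q \<and> real_of_rat q < 1 / Suc j0 \<and>
          ennreal (real_of_rat q powr - \<gamma>) * f t \<omega> (real_of_rat q) < ennreal (1 / Suc k0)"
        using q(1)[of n] n y(1) unfolding u_def by (intro exI[of _ "q n"]) auto
    qed
  qed
qed

lemma goodQ_meas: "{x \<in> space (\<mu> \<Otimes>\<^sub>M M). goodQ \<gamma> (f (fst x) (snd x))} \<in> sets (\<mu> \<Otimes>\<^sub>M M)"
  unfolding goodQ_def using f_meas by measurable

lemma swap:
  assumes "AE t in \<mu>. Liminf (at_right 0) (\<lambda>r. ennreal (r powr -\<gamma>) * (\<integral>\<^sup>+\<omega>. f t \<omega> r \<partial>M)) = 0"
  shows "AE \<omega> in M. AE t in \<mu>. goodQ \<gamma> (f t \<omega>)"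
proof -
  interpret \<mu>: prob_space \<mu> by (rule P\<mu>)
  interpret M: prob_space M by (rule M)
  interpret pair_sigma_finite \<mu> M ..
  have "AE t in \<mu>. AE \<omega> in M. goodQ \<gamma> (f t \<omega>)"
    using assms by (rule eventually_mono) (rule pointwise)
  then show ?thesis using AE_commute[OF goodQ_meas] by blast
qed

end

lemma prem_top_aux:
  fixes \<nu> :: "'b::euclidean_space measure" and E X :: "'b set"
  assumes S\<nu>: "sets \<nu> = sets borel" and fin: "emeasure \<nu> UNIV < \<top>"
    and s: "0 \<le> s" and c: "0 < c" and XE: "X \<subseteq> E"
    and big: "\<And>B. B \<in> sets borel \<Longrightarrow> X \<subseteq> B \<Longrightarrow> ennreal c \<le> emeasure \<nu> B"
    and loc: "\<And>x e d. x \<in> X \<Longrightarrow> 0 < e \<Longrightarrow> 0 < d \<Longrightarrow>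
        \<exists>r. 0 < r \<and> r < d \<and> ennreal (r powr -s) * emeasure \<nu> (cball x r) < ennreal e"
    and d: "0 < \<delta>"
  shows "\<exists>F. finite F \<and> (\<forall>(x,r)\<in>F. x \<in> E \<and> 0 < r \<and> r \<le> \<delta>)
             \<and> disjoint_family_on (\<lambda>(x,r). cball x r) F \<and> ennreal K < (\<Sum>(x,r)\<in>F. ennreal ((2 * r) powr s))"
proof -
  define K' where "K' = max K 0"
  define \<epsilon> where "\<epsilon> = c / (2 * (5/2) powr s * (K' + 1))"
  have K': "0 \<le> K'" "K \<le> K'" by (auto simp: K'_def)
  have \<epsilon>: "0 < \<epsilon>" using c K' by (simp add: \<epsilon>_def)
  have "\<forall>x\<in>X. \<exists>\<rho>. 0 < \<rho> \<and> \<rho> < 5 * \<delta> \<and> ennreal (\<rho> powr -s) * emeasure \<nu> (cball x \<rho>) < ennreal \<epsilon>"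
    using loc \<epsilon> d by auto
  then obtain \<rho> where \<rho>: "\<And>x. x \<in> X \<Longrightarrow> 0 < \<rho> x \<and> \<rho> x < 5 * \<delta> \<and>
      ennreal (\<rho> x powr -s) * emeasure \<nu> (cball x (\<rho> x)) < ennreal \<epsilon>"
    by metis
  define r where "r x = \<rho> x / 5" for x
  have r: "0 < r x" "r x \<le> \<delta>" if "x \<in> X" for x using \<rho>[OF that] by (auto simp: r_def)
  have bnd: "emeasure \<nu> (cball x (5 * r x)) \<le> ennreal (\<epsilon> * (5/2) powr s * (2 * r x) powr s)" if x: "x \<in> X" for x
  proof -
    have e5: "5 * r x = \<rho> x" by (simp add: r_def)
    have pos: "0 < \<rho> x" using \<rho>[OF x] by auto
    have "emeasure \<nu> (cball x (\<rho> x)) = ennreal (\<rho> x powr s) * (ennreal (\<rho> x powr -s) * emeasure \<nu> (cball x (\<rho> x)))"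
      using pos by (simp add: mult.assoc[symmetric] ennreal_mult[symmetric] powr_minus field_simps)
    also have "\<dots> \<le> ennreal (\<rho> x powr s) * ennreal \<epsilon>"
      using \<rho>[OF x] by (intro mult_left_mono) auto
    also have "\<dots> = ennreal (\<epsilon> * (5/2) powr s * (2 * r x) powr s)"
    proof -
      have "(5/2) powr s * (2 * r x) powr s = \<rho> x powr s"
        using pos r[OF x] by (simp add: powr_mult[symmetric] r_def)
      then show ?thesis using \<epsilon> pos by (simp add: ennreal_mult[symmetric] mult.commute mult.assoc)
    qed
    finally show ?thesis by (simp add: e5)
  qed
  have XU: "X \<subseteq> (\<Union>x\<in>X. cball x (r x))" using r by force
  obtain C where C: "countable C" "C \<subseteq> X"
     "pairwise (\<lambda>i j. disjnt (cball i (r i)) (cball j (r j))) C"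
     "X \<subseteq> (\<Union>i\<in>C. cball i (5 * r i))"
    using Vitali_covering_lemma_cballs[where S=X and K=X and a="\<lambda>x. x" and r=r and B=\<delta>, OF XU] r by auto
  have Cne: "C \<noteq> {}"
  proof
    assume "C = {}"
    then have "X \<subseteq> {}" using C(4) by auto
    then have "ennreal c \<le> emeasure \<nu> {}" by (intro big) auto
    then show False using c by simp
  qed
  define e where "e = from_nat_into C"
  have eC: "range e = C" using Cne C(1) by (simp add: e_def range_from_nat_into)
  define U where "U n = (\<Union>i\<in>e ` {..<n}. cball i (5 * r i))" for n
  have Usets: "range U \<subseteq> sets \<nu>" unfolding U_def S\<nu> by auto
  have Uinc: "incseq U" unfolding U_def incseq_def by (auto 4 3 intro: order.strict_trans2)
  have UU: "(\<Union>n. U n) = (\<Union>i\<in>C. cball i (5 * r i))"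
    unfolding U_def eC[symmetric] by (auto intro: lessI)
  have "ennreal c \<le> emeasure \<nu> (\<Union>n. U n)"
  proof (rule big)
    show "X \<subseteq> (\<Union>n. U n)" using C(4) UU by simp
    show "(\<Union>n. U n) \<in> sets borel" using Usets S\<nu> by (metis sets.countable_UN)
  qed
  also have "\<dots> = (SUP n. emeasure \<nu> (U n))" by (rule SUP_emeasure_incseq[OF Usets Uinc, symmetric])
  finally have cle: "ennreal c \<le> (SUP n. emeasure \<nu> (U n))" .
  have "ennreal (c/2) < ennreal c" using c by (intro ennreal_lessI) auto
  then have "ennreal (c/2) < (SUP n. emeasure \<nu> (U n))" using cle by (rule order.strict_trans2)
  then obtain n where n: "ennreal (c/2) < emeasure \<nu> (U n)" by (auto simp: less_SUP_iff)
  define C' where "C' = e ` {..<n}"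
  have C': "finite C'" "C' \<subseteq> X" using C(2) eC by (auto simp: C'_def)
  define S where "S = (\<Sum>x\<in>C'. (2 * r x) powr s)"
  have "ennreal (c/2) < emeasure \<nu> (\<Union>x\<in>C'. cball x (5 * r x))" using n by (simp add: U_def C'_def)
  also have "\<dots> \<le> (\<Sum>x\<in>C'. emeasure \<nu> (cball x (5 * r x)))"
    using C' by (intro emeasure_subadditive_finite) (auto simp: S\<nu>)
  also have "\<dots> \<le> (\<Sum>x\<in>C'. ennreal (\<epsilon> * (5/2) powr s * (2 * r x) powr s))"
    using C' by (intro sum_mono bnd) auto
  also have "\<dots> = ennreal (\<epsilon> * (5/2) powr s * S)"
    using \<epsilon> by (subst sum_ennreal) (auto simp: S_def sum_distrib_left)
  finally have "c/2 < \<epsilon> * (5/2) powr s * S"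
    using c by (subst (asm) ennreal_less_iff) auto
  also have "\<epsilon> * (5/2) powr s * S = c * S / (2 * (K' + 1))"
  proof -
    have "c / (2 * p * (K' + 1)) * p * S = c * S / (2 * (K' + 1))" if "0 < p" for p :: real
    proof -
      have "c / (2 * p * (K' + 1)) * p * S = (c * S * p) / ((2 * (K' + 1)) * p)" by (simp add: ac_simps)
      also have "\<dots> = c * S / (2 * (K' + 1))" using that K' by (intro mult_divide_mult_cancel_right) auto
      finally show ?thesis .
    qed
    then show ?thesis unfolding \<epsilon>_def by simp
  qed
  finally have "c * (K' + 1) < c * S" using c K' by (simp add: field_simps)
  then have KS: "K' + 1 < S" using c by simp
  define F where "F = (\<lambda>x. (x, r x)) ` C'"
  have "(\<Sum>(x,r)\<in>F. ennreal ((2 * r) powr s)) = (\<Sum>x\<in>C'. ennreal ((2 * r x) powr s))"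
    unfolding F_def by (subst sum.reindex) (auto simp: inj_on_def)
  also have "\<dots> = ennreal S" by (simp add: S_def)
  finally have sumF: "(\<Sum>(x,r)\<in>F. ennreal ((2 * r) powr s)) = ennreal S" .
  show ?thesis
  proof (intro exI[of _ F] conjI)
    show "finite F" using C' by (simp add: F_def)
    show "\<forall>(x, ra)\<in>F. x \<in> E \<and> 0 < ra \<and> ra \<le> \<delta>" using C' r XE by (auto simp: F_def)
    show "disjoint_family_on (\<lambda>(x, r). cball x r) F"
      using C(3) C' unfolding disjoint_family_on_def F_def pairwise_def disjnt_def C'_def eC[symmetric]
      by auto
    show "ennreal K < (\<Sum>(x, r)\<in>F. ennreal ((2 * r) powr s))"
      using KS K' by (simp add: sumF ennreal_lessI)
  qed
qed

lemma prem_top: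
  fixes \<nu> :: "'b::euclidean_space measure" and E X :: "'b set"
  assumes S\<nu>: "sets \<nu> = sets borel" and fin: "emeasure \<nu> UNIV < \<top>"
    and s: "0 \<le> s" and c: "0 < c" and XE: "X \<subseteq> E"
    and big: "\<And>B. B \<in> sets borel \<Longrightarrow> X \<subseteq> B \<Longrightarrow> ennreal c \<le> emeasure \<nu> B"
    and loc: "\<And>x e d. x \<in> X \<Longrightarrow> 0 < e \<Longrightarrow> 0 < d \<Longrightarrow>
        \<exists>r. 0 < r \<and> r < d \<and> ennreal (r powr -s) * emeasure \<nu> (cball x r) < ennreal e"
  shows "packing_premeasure s E = \<top>"
  unfolding packing_premeasure_def
proof -
  have "(SUP F\<in>{F. finite F \<and> (\<forall>(x,r)\<in>F. x \<in> E \<and> 0 < r \<and> r \<le> \<delta>)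
                         \<and> disjoint_family_on (\<lambda>(x,r). cball x r) F}.
        (\<Sum>(x,r)\<in>F. ennreal ((2 * r) powr s))) = \<top>" if d: "0 < \<delta>" for \<delta>
  proof (rule ennreal_SUP_eq_top)
    fix n :: nat
    obtain F where "finite F \<and> (\<forall>(x,r)\<in>F. x \<in> E \<and> 0 < r \<and> r \<le> \<delta>)
             \<and> disjoint_family_on (\<lambda>(x,r). cball x r) F \<and> ennreal (real n) < (\<Sum>(x,r)\<in>F. ennreal ((2 * r) powr s))"
      using prem_top_aux[OF assms d] by blast
    then show "\<exists>F\<in>{F. finite F \<and> (\<forall>(x,r)\<in>F. x \<in> E \<and> 0 < r \<and> r \<le> \<delta>)
                         \<and> disjoint_family_on (\<lambda>(x,r). cball x r) F}. of_nat n \<le> (\<Sum>(x,r)\<in>F. ennreal ((2 * r) powr s))"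
      by (intro bexI[of _ F]) (auto simp: ennreal_of_nat_eq_real_of_nat intro: less_imp_le)
  qed
  then show "(INF \<delta>\<in>{0<..}. SUP F\<in>{F. finite F \<and> (\<forall>(x,r)\<in>F. x \<in> E \<and> 0 < r \<and> r \<le> \<delta>)
                         \<and> disjoint_family_on (\<lambda>(x,r). cball x r) F}.
        (\<Sum>(x,r)\<in>F. ennreal ((2 * r) powr s))) = \<top>"
    by (simp add: INF_eq_const)
qed

lemma null_hull:
  fixes \<nu> :: "'b::topological_space measure"
  assumes S\<nu>: "sets \<nu> = sets borel"
    and H: "\<And>c. 0 < c \<Longrightarrow> \<exists>B\<in>sets borel. X \<subseteq> B \<and> emeasure \<nu> B < ennreal c"
  shows "\<exists>N\<in>sets borel. X \<subseteq> N \<and> emeasure \<nu> N = 0"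
proof -
  have "\<forall>n::nat. \<exists>B. B \<in> sets borel \<and> X \<subseteq> B \<and> emeasure \<nu> B < ennreal (1 / Suc n)"
  proof
    fix n :: nat
    show "\<exists>B. B \<in> sets borel \<and> X \<subseteq> B \<and> emeasure \<nu> B < ennreal (1 / Suc n)"
      using H[of "1 / Suc n"] by auto
  qed
  then obtain B where B: "\<And>n. B n \<in> sets borel" "\<And>n. X \<subseteq> B n" "\<And>n. emeasure \<nu> (B n) < ennreal (1 / Suc n)"
    by (subst (asm) choice_iff) (elim exE, blast)
  define N where "N = (\<Inter>n. B n)"
  have N: "N \<in> sets borel" using B(1) unfolding N_def by auto
  have "emeasure \<nu> N \<le> ennreal (1 / Suc n)" for n
  proof -
    have "emeasure \<nu> N \<le> emeasure \<nu> (B n)"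
      using B(1) S\<nu> by (intro emeasure_mono) (auto simp: N_def)
    then show ?thesis using B(3)[of n] by simp
  qed
  have "emeasure \<nu> N \<le> 0"
  proof (rule ennreal_le_epsilon)
    fix e :: real assume e: "0 < e"
    obtain n where "inverse (real (Suc n)) < e" using reals_Archimedean[OF e] by blast
    then have "ennreal (1 / Suc n) \<le> ennreal e" by (intro ennreal_leI) (simp add: divide_inverse)
    then show "emeasure \<nu> N \<le> 0 + ennreal e" using \<open>\<And>n. emeasure \<nu> N \<le> ennreal (1 / Suc n)\<close>[of n] by simp
  qed
  then show ?thesis using N B(2) by (intro bexI[of _ N]) (auto simp: N_def)
qed

context setup_Z begin

lemma T_meas: "\<omega> \<in> space M \<Longrightarrow> {t. goodQ \<gamma> (f t \<omega>)} \<in> sets \<mu>"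
  using sets_Pair2[OF goodQ_meas[of \<gamma>], of \<omega>] by (simp add: space_pair_measure vimage_def)

lemma key:
  assumes G: "AE t in \<mu>. Liminf (at_right 0) (\<lambda>r. ennreal (r powr -\<gamma>) *
        (\<integral>\<^sup>+\<omega>. emeasure (image_measure \<mu> Z \<omega>) (cball (Z t \<omega>) r) \<partial>M)) = 0"
  shows "AE \<omega> in M. \<forall>S W s. W \<in> sets \<mu> \<longrightarrow> 0 < emeasure \<mu> W \<longrightarrow> (\<lambda>t. Z t \<omega>) ` W \<subseteq> S
      \<longrightarrow> 0 \<le> s \<longrightarrow> s \<le> \<gamma> \<longrightarrow> packing_measure s S = \<top>"
proof -
  interpret \<mu>: prob_space \<mu> by (rule P\<mu>)
  have "AE \<omega> in M. AE t in \<mu>. goodQ \<gamma> (f t \<omega>)"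
    using G by (intro swap) (simp add: f_def)
  then show ?thesis
  proof (rule AE_mp[OF _ AE_I2], intro impI allI)
    fix \<omega> S W s
    assume \<omega>: "\<omega> \<in> space M" and AEt: "AE t in \<mu>. goodQ \<gamma> (f t \<omega>)"
    assume W: "W \<in> sets \<mu>" "0 < emeasure \<mu> W" "(\<lambda>t. Z t \<omega>) ` W \<subseteq> S" and s: "0 \<le> s" "s \<le> \<gamma>"
    define \<nu> where "\<nu> = image_measure \<mu> Z \<omega>"
    have S\<nu>: "sets \<nu> = sets borel" by (simp add: \<nu>_def image_measure_def)
    have \<nu>em: "emeasure \<nu> B = emeasure \<mu> ((\<lambda>t. Z t \<omega>) -` B)" if "B \<in> sets borel" for B
      unfolding \<nu>_def image_measure_def using that Zsec[OF \<omega>] by (subst emeasure_distr) auto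
    have fin: "emeasure \<nu> UNIV < \<top>" using \<nu>em[of UNIV] \<mu>.emeasure_space_1 by simp
    define T where "T = {t. goodQ \<gamma> (f t \<omega>)}"
    have T: "T \<in> sets \<mu>" using T_meas[OF \<omega>] by (simp add: T_def)
    have "AE t in \<mu>. t \<in> T" using AEt by (simp add: T_def)
    moreover have TC: "UNIV - T \<in> sets \<mu>" using sets.compl_sets[OF T] by simp
    ultimately have "emeasure \<mu> (UNIV - T) = 0" using AE_iff_measurable[OF TC, of "\<lambda>t. t \<in> T"] by auto
    define W' where "W' = W \<inter> T"
    have W'm: "W' \<in> sets \<mu>" using W T by (simp add: W'_def)
    have "emeasure \<mu> W = emeasure \<mu> W'"
    proof -
      have "UNIV - T \<in> null_sets \<mu>" using TC \<open>emeasure \<mu> (UNIV - T) = 0\<close> by (auto simp: null_sets_def)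
      then have "emeasure \<mu> (W - (UNIV - T)) = emeasure \<mu> W" using W(1) by (rule emeasure_Diff_null_set)
      moreover have "W - (UNIV - T) = W'" by (auto simp: W'_def)
      ultimately show ?thesis by simp
    qed
    then have W'pos: "0 < emeasure \<mu> W'" using W by simp
    show "packing_measure s S = \<top>"
      unfolding packing_measure_def
    proof (rule INF_eq_const)
      show "{Es. S \<subseteq> \<Union> (range Es)} \<noteq> {}" by (auto intro!: exI[of _ "\<lambda>_. S"])
      fix Es :: "nat \<Rightarrow> 'b set" assume Es: "Es \<in> {Es. S \<subseteq> \<Union> (range Es)}"
      define X where "X i = Es i \<inter> (\<lambda>t. Z t \<omega>) ` W'" for i
      have "\<exists>i. \<exists>c>0. \<forall>B. B \<in> sets borel \<longrightarrow> X i \<subseteq> B \<longrightarrow> ennreal c \<le> emeasure \<nu> B"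
      proof (rule ccontr)
        assume "\<not> ?thesis"
        then have "\<forall>i. \<exists>N\<in>sets borel. X i \<subseteq> N \<and> emeasure \<nu> N = 0"
          by (intro allI null_hull[OF S\<nu>]) (auto simp: not_le Bex_def)
        then obtain N where N: "\<And>i. N i \<in> sets borel" "\<And>i. X i \<subseteq> N i" "\<And>i. emeasure \<nu> (N i) = 0"
          by metis
        have Nu: "(\<Union>i. N i) \<in> sets borel" using N(1) by auto
        have "emeasure \<nu> (\<Union>i. N i) = 0"
          using N S\<nu> by (intro emeasure_UN_eq_0) auto
        moreover have "W' \<subseteq> (\<lambda>t. Z t \<omega>) -` (\<Union>i. N i)"
        proof
          fix t assume t: "t \<in> W'"
          then have "Z t \<omega> \<in> S" using W(3) by (auto simp: W'_def)
          then obtain i where "Z t \<omega> \<in> Es i" using Es by auto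
          then have "Z t \<omega> \<in> X i" using t by (auto simp: X_def)
          then show "t \<in> (\<lambda>t. Z t \<omega>) -` (\<Union>i. N i)" using N(2) by auto
        qed
        moreover have "(\<lambda>t. Z t \<omega>) -` (\<Union>i. N i) \<in> sets \<mu>"
          using measurable_sets[OF Zsec[OF \<omega>] Nu] by simp
        ultimately have "emeasure \<mu> W' \<le> 0"
          using \<nu>em[OF Nu] emeasure_mono by metis
        then show False using W'pos by simp
      qed
      then obtain i c where c: "0 < c" "\<And>B. B \<in> sets borel \<Longrightarrow> X i \<subseteq> B \<Longrightarrow> ennreal c \<le> emeasure \<nu> B"
        by blast
      have loc: "\<exists>r. 0 < r \<and> r < d \<and> ennreal (r powr -s) * emeasure \<nu> (cball x r) < ennreal e"
        if x: "x \<in> X i" and e: "0 < e" and d: "0 < d" for x e d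
      proof -
        obtain t where t: "t \<in> W'" "x = Z t \<omega>" using x by (auto simp: X_def)
        then have gq: "goodQ \<gamma> (f t \<omega>)" by (simp add: W'_def T_def)
        obtain k where k: "inverse (real (Suc k)) < e" using reals_Archimedean[OF e] by blast
        have "0 < min d 1" using d by simp
        then obtain j where j: "inverse (real (Suc j)) < min d 1" using reals_Archimedean by blast
        obtain q where q: "0 < real_of_rat q" "real_of_rat q < 1 / Suc j"
          "ennreal (real_of_rat q powr -\<gamma>) * f t \<omega> (real_of_rat q) < ennreal (1 / Suc k)"
          using gq unfolding goodQ_def by blast
        define r where "r = real_of_rat q"
        have a: "1 / real (Suc j) = inverse (real (Suc j))" by (simp add: divide_inverse)
        have j2: "inverse (real (Suc j)) < d" "inverse (real (Suc j)) < 1" using j by auto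
        have r: "0 < r" "r < d" "r \<le> 1" using q(1,2) j2 a unfolding r_def by linarith+
        have fq: "f t \<omega> r = emeasure \<nu> (cball x r)" by (simp add: f_def \<nu>_def t(2))
        have "ennreal (r powr -s) * emeasure \<nu> (cball x r) \<le> ennreal (r powr -\<gamma>) * emeasure \<nu> (cball x r)"
          using r s by (intro mult_right_mono ennreal_leI powr_mono') auto
        also have "\<dots> < ennreal (1 / Suc k)" using q(3) fq by (simp add: r_def)
        also have "\<dots> \<le> ennreal e" using k by (intro ennreal_leI) (simp add: divide_inverse)
        finally show ?thesis using r by blast
      qed
      have "packing_premeasure s (Es i) = \<top>"
        by (rule prem_top[OF S\<nu> fin s(1) c(1) _ c(2) loc]) (auto simp: X_def)
      then show "(\<Sum>i. packing_premeasure s (Es i)) = \<top>"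
        using ennreal_suminf_lessD[of "\<lambda>i. packing_premeasure s (Es i)" \<top> i] using top.not_eq_extremum by blast
    qed
  qed
qed

end

definition Gam :: "'w measure \<Rightarrow> ('a::euclidean_space \<Rightarrow> 'w \<Rightarrow> 'b::euclidean_space) \<Rightarrow> 'a measure \<Rightarrow> real set" where
  "Gam M Z \<mu> = {\<gamma>. AE t in \<mu>. Liminf (at_right (0::real))
        (\<lambda>r. ennreal (r powr (-\<gamma>)) *
             (\<integral>\<^sup>+ \<omega>. emeasure (image_measure \<mu> Z \<omega>) (cball (Z t \<omega>) r) \<partial>M)) = 0}"

lemma dimZ_eq: "packing_dim_Z M Z \<mu> = Sup (ereal ` Gam M Z \<mu>)"
  unfolding packing_dim_Z_def Gam_def by (rule arg_cong[where f=Sup]) auto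

lemma Gam_down:
  assumes "\<gamma> \<in> Gam M Z \<mu>" "\<gamma>' \<le> \<gamma>"
  shows "\<gamma>' \<in> Gam M Z \<mu>"
  using assms(1) unfolding Gam_def mem_Collect_eq
proof (rule eventually_mono)
  fix t
  define I where "I r = (\<integral>\<^sup>+ \<omega>. emeasure (image_measure \<mu> Z \<omega>) (cball (Z t \<omega>) r) \<partial>M)" for r
  assume "Liminf (at_right (0::real)) (\<lambda>r. ennreal (r powr (-\<gamma>)) * (\<integral>\<^sup>+ \<omega>. emeasure (image_measure \<mu> Z \<omega>) (cball (Z t \<omega>) r) \<partial>M)) = 0"
  then have L: "Liminf (at_right (0::real)) (\<lambda>r. ennreal (r powr (-\<gamma>)) * I r) = 0" by (simp add: I_def)
  have ev: "eventually (\<lambda>r. 0 < r \<and> r < 1) (at_right (0::real))"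
    by (rule eventually_at_rightI[of 0 1]) auto
  have "Liminf (at_right (0::real)) (\<lambda>r. ennreal (r powr (-\<gamma>')) * I r) \<le> Liminf (at_right (0::real)) (\<lambda>r. ennreal (r powr (-\<gamma>)) * I r)"
  proof (rule Liminf_mono)
    show "eventually (\<lambda>r. ennreal (r powr (-\<gamma>')) * I r \<le> ennreal (r powr (-\<gamma>)) * I r) (at_right 0)"
      using ev proof (rule eventually_mono)
      fix r :: real assume "0 < r \<and> r < 1"
      then show "ennreal (r powr (-\<gamma>')) * I r \<le> ennreal (r powr (-\<gamma>)) * I r"
        using assms(2) by (intro mult_right_mono ennreal_leI powr_mono') auto
    qed
  qed
  then show "Liminf (at_right (0::real)) (\<lambda>r. ennreal (r powr (-\<gamma>')) * (\<integral>\<^sup>+ \<omega>. emeasure (image_measure \<mu> Z \<omega>) (cball (Z t \<omega>) r) \<partial>M)) = 0"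
    using L by (simp add: I_def)
qed

lemma key_ext:
  assumes "prob_space M" "jointly_measurable M Z" "sets \<mu> = sets borel" "prob_space \<mu>" "\<gamma> \<in> Gam M Z \<mu>"
  shows "AE \<omega> in M. \<forall>S W s. W \<in> sets \<mu> \<longrightarrow> 0 < emeasure \<mu> W \<longrightarrow> (\<lambda>t. Z t \<omega>) ` W \<subseteq> S
      \<longrightarrow> 0 \<le> s \<longrightarrow> s \<le> \<gamma> \<longrightarrow> packing_measure s S = \<top>"
  by (rule setup_Z.key[OF setup_Z.intro[OF assms(1-4)]]) (use assms(5) in \<open>simp add: Gam_def\<close>)

lemma pdim_ge:
  assumes "\<And>s. 0 \<le> s \<Longrightarrow> s \<le> \<gamma> \<Longrightarrow> packing_measure s S = \<top>"
  shows "ereal \<gamma> \<le> packing_dim S"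
  unfolding packing_dim_def
proof (rule Inf_greatest, safe)
  fix s assume s: "0 \<le> s" "packing_measure s S = 0"
  show "ereal \<gamma> \<le> ereal s"
  proof (rule ccontr)
    assume "\<not> ereal \<gamma> \<le> ereal s"
    then have "s \<le> \<gamma>" by simp
    then show False using assms[OF s(1)] s(2) by simp
  qed
qed

lemma support_pos:
  fixes \<mu> :: "'a::euclidean_space measure"
  assumes S: "sets \<mu> = sets borel" and P: "prob_space \<mu>"
  shows "0 < emeasure \<mu> (measure_support \<mu>)"
proof -
  interpret prob_space \<mu> by (rule P)
  have sp: "space \<mu> = UNIV" using sets_eq_imp_space_eq[OF S] by simp
  define \<F> where "\<F> = {U. open U \<and> emeasure \<mu> U = 0}"
  have comp: "UNIV - measure_support \<mu> = \<Union>\<F>"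
    by (auto simp: measure_support_def \<F>_def not_less)
  obtain \<F>' where F': "\<F>' \<subseteq> \<F>" "countable \<F>'" "\<Union>\<F>' = \<Union>\<F>"
    using Lindelof[of \<F>] by (auto simp: \<F>_def)
  have "(\<Union>U\<in>\<F>'. U) \<in> null_sets \<mu>"
    using F' by (intro null_sets_UN') (auto simp: \<F>_def null_sets_def S)
  then have N: "UNIV - measure_support \<mu> \<in> null_sets \<mu>" using comp F'(3) by simp
  have "measure_support \<mu> = UNIV - (UNIV - measure_support \<mu>)" by auto
  also have "emeasure \<mu> \<dots> = emeasure \<mu> UNIV"
    using N by (intro emeasure_Diff_null_set) (auto simp: sp[symmetric])
  finally show ?thesis using emeasure_space_1 sp by simp
qed

lemma rat_between:
  fixes y z :: real assumes "y < z"
  obtains q :: rat where "y < real_of_rat q" "real_of_rat q < z"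
proof -
  obtain x where "x \<in> \<rat>" "y < x" "x < z" using Rats_dense_in_real[OF assms] by blast
  then show ?thesis using that by (auto simp: Rats_def)
qed

lemma ereal_le_by_rat:
  fixes x z :: ereal
  assumes "\<And>q::rat. ereal (real_of_rat q) < x \<Longrightarrow> ereal (real_of_rat q) \<le> z"
  shows "x \<le> z"
proof (rule dense_le)
  fix y assume y: "y < x"
  show "y \<le> z"
  proof (cases y)
    case (real y')
    obtain w where w: "y < ereal w" "ereal w < x" using ereal_dense2[OF y] by blast
    then have "y' < w" using real by simp
    then obtain q :: rat where q: "y' < real_of_rat q" "real_of_rat q < w" using rat_between by blast
    have "ereal (real_of_rat q) < ereal w" using q(2) by simp
    then have "ereal (real_of_rat q) < x" using w(2) by (rule order.strict_trans)
    then have "ereal (real_of_rat q) \<le> z" by (rule assms)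
    then show ?thesis using q(1) real by (meson ereal_less_eq(3) order.trans less_imp_le)
  next
    case PInf then show ?thesis using y by simp
  next
    case MInf then show ?thesis by simp
  qed
qed

theorem theorem1p2:
  fixes M :: "'w measure"
    and Z :: "'a::euclidean_space \<Rightarrow> 'w \<Rightarrow> 'b::euclidean_space"
    and \<mu> :: "'a measure"
    and A :: "'a set"
  assumes "prob_space M"
    and "jointly_measurable M Z"
    and "\<mu> \<in> Pc UNIV"
    and "analytic_set A"
  shows "AE \<omega> in M. packing_dim_measure (image_measure \<mu> Z \<omega>) \<ge> packing_dim_Z M Z \<mu>
                   \<and> packing_dim ((\<lambda>t. Z t \<omega>) ` A) \<ge> packing_dim_Z_set M Z A"
proof -
  note PM = assms(1) and JM = assms(2)
  have S\<mu>: "sets \<mu> = sets borel" and P\<mu>: "prob_space \<mu>" using assms(3) by (auto simp: Pc_def)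
  have sp\<mu>: "space \<mu> = UNIV" using sets_eq_imp_space_eq[OF S\<mu>] by simp
  have part1: "AE \<omega> in M. \<forall>q::rat. real_of_rat q \<in> Gam M Z \<mu> \<longrightarrow>
      ereal (real_of_rat q) \<le> packing_dim_measure (image_measure \<mu> Z \<omega>)"
    unfolding AE_all_countable
  proof
    fix q :: rat
    show "AE \<omega> in M. real_of_rat q \<in> Gam M Z \<mu> \<longrightarrow>
      ereal (real_of_rat q) \<le> packing_dim_measure (image_measure \<mu> Z \<omega>)"
    proof (cases "real_of_rat q \<in> Gam M Z \<mu>")
      case False then show ?thesis by simp
    next
      case True
      show ?thesis
      using key_ext[OF PM JM S\<mu> P\<mu> True]
      proof (rule AE_mp[OF _ AE_I2], intro impI)
        fix \<omega> assume \<omega>: "\<omega> \<in> space M"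
        assume K: "\<forall>S W s. W \<in> sets \<mu> \<longrightarrow> 0 < emeasure \<mu> W \<longrightarrow> (\<lambda>t. Z t \<omega>) ` W \<subseteq> S
          \<longrightarrow> 0 \<le> s \<longrightarrow> s \<le> real_of_rat q \<longrightarrow> packing_measure s S = \<top>"
        have Zs: "(\<lambda>t. Z t \<omega>) \<in> borel_measurable \<mu>"
          using setup_Z.Zsec[OF setup_Z.intro[OF PM JM S\<mu> P\<mu>] \<omega>] .
        show "ereal (real_of_rat q) \<le> packing_dim_measure (image_measure \<mu> Z \<omega>)"
          unfolding packing_dim_measure_def
        proof (rule Inf_greatest, safe)
          fix E :: "'b set" assume E: "E \<in> sets borel" "0 < emeasure (image_measure \<mu> Z \<omega>) E"
          define W where "W = (\<lambda>t. Z t \<omega>) -` E"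
          have W: "W \<in> sets \<mu>" using measurable_sets[OF Zs E(1)] by (simp add: W_def sp\<mu>)
          have "emeasure (image_measure \<mu> Z \<omega>) E = emeasure \<mu> W"
            unfolding image_measure_def W_def using E(1) Zs by (subst emeasure_distr) (auto simp: sp\<mu>)
          then have Wpos: "0 < emeasure \<mu> W" using E(2) by simp
          show "ereal (real_of_rat q) \<le> packing_dim E"
            using K W Wpos by (intro pdim_ge) (auto simp: W_def)
        qed
      qed
    qed
  qed
  have part2: "AE \<omega> in M. \<forall>q::rat. (\<exists>\<mu>'\<in>Pc A. ereal (real_of_rat q) < packing_dim_Z M Z \<mu>') \<longrightarrow>
      ereal (real_of_rat q) \<le> packing_dim ((\<lambda>t. Z t \<omega>) ` A)"
    unfolding AE_all_countable
  proof
    fix q :: rat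
    show "AE \<omega> in M. (\<exists>\<mu>'\<in>Pc A. ereal (real_of_rat q) < packing_dim_Z M Z \<mu>') \<longrightarrow>
      ereal (real_of_rat q) \<le> packing_dim ((\<lambda>t. Z t \<omega>) ` A)"
    proof (cases "\<exists>\<mu>'\<in>Pc A. ereal (real_of_rat q) < packing_dim_Z M Z \<mu>'")
      case False then show ?thesis by simp
    next
      case True
      then obtain \<mu>' where \<mu>': "\<mu>' \<in> Pc A" "ereal (real_of_rat q) < packing_dim_Z M Z \<mu>'" by blast
      have S': "sets \<mu>' = sets borel" and P': "prob_space \<mu>'" and C': "compact (measure_support \<mu>')"
        and A': "measure_support \<mu>' \<subseteq> A" using \<mu>'(1) by (auto simp: Pc_def)
      obtain \<gamma> where \<gamma>: "\<gamma> \<in> Gam M Z \<mu>'" "ereal (real_of_rat q) < ereal \<gamma>"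
        using \<mu>'(2) unfolding dimZ_eq less_Sup_iff by blast
      have qG: "real_of_rat q \<in> Gam M Z \<mu>'" using \<gamma> by (intro Gam_down[OF \<gamma>(1)]) simp
      have Wm: "measure_support \<mu>' \<in> sets \<mu>'"
        using C' by (simp add: S' compact_imp_closed borel_closed)
      have Wp: "0 < emeasure \<mu>' (measure_support \<mu>')" by (rule support_pos[OF S' P'])
      show ?thesis
        using key_ext[OF PM JM S' P' qG]
      proof (rule eventually_mono, intro impI)
        fix \<omega>
        assume K: "\<forall>S W s. W \<in> sets \<mu>' \<longrightarrow> 0 < emeasure \<mu>' W \<longrightarrow> (\<lambda>t. Z t \<omega>) ` W \<subseteq> S
          \<longrightarrow> 0 \<le> s \<longrightarrow> s \<le> real_of_rat q \<longrightarrow> packing_measure s S = \<top>"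
        show "ereal (real_of_rat q) \<le> packing_dim ((\<lambda>t. Z t \<omega>) ` A)"
          using K Wm Wp A' by (intro pdim_ge) (auto simp: image_mono)
      qed
    qed
  qed
  show ?thesis
    using eventually_conj[OF part1 part2]
  proof (rule eventually_mono, elim conjE, intro conjI)
    fix \<omega>
    assume p1: "\<forall>q::rat. real_of_rat q \<in> Gam M Z \<mu> \<longrightarrow>
      ereal (real_of_rat q) \<le> packing_dim_measure (image_measure \<mu> Z \<omega>)"
    assume p2: "\<forall>q::rat. (\<exists>\<mu>'\<in>Pc A. ereal (real_of_rat q) < packing_dim_Z M Z \<mu>') \<longrightarrow>
      ereal (real_of_rat q) \<le> packing_dim ((\<lambda>t. Z t \<omega>) ` A)"
    show "packing_dim_Z M Z \<mu> \<le> packing_dim_measure (image_measure \<mu> Z \<omega>)"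
    proof (rule ereal_le_by_rat)
      fix q :: rat assume "ereal (real_of_rat q) < packing_dim_Z M Z \<mu>"
      then obtain \<gamma> where \<gamma>: "\<gamma> \<in> Gam M Z \<mu>" "ereal (real_of_rat q) < ereal \<gamma>"
        unfolding dimZ_eq less_Sup_iff by blast
      have "real_of_rat q \<in> Gam M Z \<mu>" using \<gamma> by (intro Gam_down[OF \<gamma>(1)]) simp
      then show "ereal (real_of_rat q) \<le> packing_dim_measure (image_measure \<mu> Z \<omega>)" using p1 by blast
    qed
    show "packing_dim_Z_set M Z A \<le> packing_dim ((\<lambda>t. Z t \<omega>) ` A)"
    proof (rule ereal_le_by_rat)
      fix q :: rat assume "ereal (real_of_rat q) < packing_dim_Z_set M Z A"
      then have "\<exists>\<mu>'\<in>Pc A. ereal (real_of_rat q) < packing_dim_Z M Z \<mu>'"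
        unfolding packing_dim_Z_set_def less_SUP_iff by blast
      then show "ereal (real_of_rat q) \<le> packing_dim ((\<lambda>t. Z t \<omega>) ` A)" using p2 by blast
    qed
  qed
qed

end
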